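(* Let $n\ge 1$ and let $S\subseteq U_{6n}$ with $1\notin S=S^{-1}$. Write $S=S_1\cup S_2$ where $S_1=S\cap\left(\langle a^2\rangle\cup\langle a^2\rangle b\cup\langle a^2\rangle b^2\right)$ and $S_2=S\cap\left(\langle a^2\rangle a\cup\langle a^2\rangle ab\cup\langle a^2\rangle ab^2\right)$. Then $\mathrm{Cay}(U_{6n},S)$ is integral if and only if both of the following hold for all $0\le j\le 2n-1$ and $0\le k\le n-1$: (1) $\chi_j(S)$, $\psi_k(S_1)$ and $\psi_k(S_1^2)+\psi_k(S_2^2)$ are integers; (2) $\Delta_{\psi_k}(S):=2\left(\psi_k(S_1^2)+\psi_k(S_2^2)\right)-\psi_k(S_1)^2$ is a perfect square (the square of an integer).
   Context: For an integer $n\ge1$, $U_{6n}=\langle a,b\mid a^{2n}=b^3=1,\ a^{-1}ba=b^{-1}\rangle$, a group of order $6n$ whose elements are uniquely $a^ib^\epsilon$ with $0\le i\le 2n-1$, $\epsilon\in\{0,1,2\}$. Let $\omega=\exp(\pi\imath/n)$. Its irreducible complex characters are: the $2n$ linear characters $\chi_j$ ($0\le j\le 2n-1$) given by $\chi_j(a^{2r}b^\epsilon)=\omega^{2jr}$ and $\chi_j(a^{2r+1}b^\epsilon)=\omega^{j(2r+1)}$ for all $\epsilon\in\{0,1,2\}$; and the $n$ degree-two characters $\psi_k$ ($0\le k\le n-1$) given by $\psi_k(a^{2r})=2\omega^{2kr}$, $\psi_k(a^{2r}b)=\psi_k(a^{2r}b^2)=-\omega^{2kr}$, $\psi_k(a^{2r+1}b^\epsilon)=0$.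 For a character $\chi$ and subsets $A,B$ of a group, $\chi(A)=\sum_{x\in A}\chi(x)$ (with $\chi(\emptyset)=0$) and $\chi(A^2)=\sum_{x_1,x_2\in A}\chi(x_1x_2)$, the sum running over all ordered pairs. For a group $G$ and $S\subseteq G$ with $1\notin S=S^{-1}$, the Cayley graph $\mathrm{Cay}(G,S)$ has vertex set $G$ and edges $\{g,sg\}$ for $g\in G,s\in S$. A graph is integral if all eigenvalues of its adjacency matrix are integers. *)

theory Defs
  imports Complex_Main "HOL-Algebra.Group"
begin

text \<open>The group U_{6n}: the element a^i b^e (0 <= i < 2n, 0 <= e < 3) is encoded as
  the pair (i, e). Since b a = a b^{-1}, we have b^e a^j = a^j b^{e (-1)^j}, hence
  (a^i b^e)(a^j b^f) = a^{i+j} b^{e (-1)^j + f}.\<close>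

definition U_mult :: "nat \<Rightarrow> nat \<times> nat \<Rightarrow> nat \<times> nat \<Rightarrow> nat \<times> nat" where
  "U_mult n x y = ((fst x + fst y) mod (2 * n),
                   (if even (fst y) then snd x + snd y
                    else 2 * snd x + snd y) mod 3)"

definition U :: "nat \<Rightarrow> (nat \<times> nat) monoid" where
  "U n = \<lparr> carrier = {0..<2 * n} \<times> {0..<3}, mult = U_mult n, one = (0, 0) \<rparr>"

definition gen_a :: "nat \<times> nat" where "gen_a = (1, 0)"
definition gen_b :: "nat \<times> nat" where "gen_b = (0, 1)"

definition omega :: "nat \<Rightarrow> complex" where
  "omega n = exp (complex_of_real pi * \<i> / of_nat n)"

definition chi :: "nat \<Rightarrow> nat \<Rightarrow> nat \<times> nat \<Rightarrow> complex" where
  "chi n j x = omega n ^ (j * fst x)"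

definition psi :: "nat \<Rightarrow> nat \<Rightarrow> nat \<times> nat \<Rightarrow> complex" where
  "psi n k x = (if even (fst x)
                then (if snd x = 0 then 2 * omega n ^ (k * fst x) else - (omega n ^ (k * fst x)))
                else 0)"

text \<open>chi(A) and chi(A^2) (sum over ordered pairs) for a character on a group G.\<close>
definition char_set :: "('a \<Rightarrow> complex) \<Rightarrow> 'a set \<Rightarrow> complex" where
  "char_set c A = (\<Sum>x\<in>A. c x)"

definition char_sq :: "('a, 'b) monoid_scheme \<Rightarrow> ('a \<Rightarrow> complex) \<Rightarrow> 'a set \<Rightarrow> complex" where
  "char_sq G c A = (\<Sum>x1\<in>A. \<Sum>x2\<in>A. c (x1 \<otimes>\<^bsub>G\<^esub> x2))"

definition cay_adj :: "('a, 'b) monoid_scheme \<Rightarrow> 'a set \<Rightarrow> 'a \<Rightarrow> 'a \<Rightarrow> complex" where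
  "cay_adj G S g h = (if h \<otimes>\<^bsub>G\<^esub> inv\<^bsub>G\<^esub> g \<in> S then 1 else 0)"

definition mat_eigenvalue :: "'a set \<Rightarrow> ('a \<Rightarrow> 'a \<Rightarrow> complex) \<Rightarrow> complex \<Rightarrow> bool" where
  "mat_eigenvalue V M c \<longleftrightarrow>
     (\<exists>f :: 'a \<Rightarrow> complex. (\<exists>v\<in>V. f v \<noteq> 0) \<and>
        (\<forall>g\<in>V. (\<Sum>h\<in>V. M g h * f h) = c * f g))"

definition integral_cayley :: "('a, 'b) monoid_scheme \<Rightarrow> 'a set \<Rightarrow> bool" where
  "integral_cayley G S \<longleftrightarrow>
     (\<forall>c. mat_eigenvalue (carrier G) (cay_adj G S) c \<longrightarrow> c \<in> \<int>)"

end

theory Submission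
  imports Defs
begin



lemma even_mod_2n: "even ((m::nat) mod (2*n)) \<longleftrightarrow> even m"
  by (metis dvd_mod_iff dvd_triv_left even_mod_2_iff mod_mod_cancel)

lemma U_group: assumes "n \<ge> 1" shows "group (U n)"
proof (rule groupI)
  fix x y assume "x \<in> carrier (U n)" "y \<in> carrier (U n)"
  then show "x \<otimes>\<^bsub>U n\<^esub> y \<in> carrier (U n)" using assms
    by (auto simp: U_def U_mult_def)
next
  show "\<one>\<^bsub>U n\<^esub> \<in> carrier (U n)" using assms by (auto simp: U_def)
next
  fix x y z assume "x \<in> carrier (U n)" "y \<in> carrier (U n)" "z \<in> carrier (U n)"
  obtain i e where x: "x = (i,e)" by force
  obtain j f where y: "y = (j,f)" by force
  obtain k g where z: "z = (k,g)" by force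
  have 1: "((i + j) mod (2*n) + k) mod (2*n) = (i + (j + k) mod (2*n)) mod (2*n)"
    by (metis add.assoc mod_add_left_eq mod_add_right_eq)
  have 2: "(if even k then (if even j then e + f else 2 * e + f) mod 3 + g
           else 2 * ((if even j then e + f else 2 * e + f) mod 3) + g) mod 3 =
          (if even ((j + k) mod (2*n)) then e + (if even k then f + g else 2 * f + g) mod 3
           else 2 * e + (if even k then f + g else 2 * f + g) mod 3) mod 3"
  proof -
    have a: "(g + (f * 2 + e * 4)) mod 3 = (e + (g + f * 2)) mod 3"
    proof -
      have "g + (f * 2 + e * 4) = (e + (g + f * 2)) + 3*e" by simp
      then show ?thesis by (metis mod_mult_self2)
    qed
    have b: "\<And>x g::nat. (g + 2*(x mod 3)) mod 3 = (g + 2*x) mod 3"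
      by (metis mod_add_right_eq mod_mult_right_eq)
    show ?thesis unfolding even_mod_2n
      by (cases "even j"; cases "even k"; simp add: mod_simps algebra_simps a b)
  qed
  show "x \<otimes>\<^bsub>U n\<^esub> y \<otimes>\<^bsub>U n\<^esub> z = x \<otimes>\<^bsub>U n\<^esub> (y \<otimes>\<^bsub>U n\<^esub> z)"
    using 1 2 by (simp add: U_def U_mult_def x y z split del: if_split cong: if_cong)
next
  fix x assume "x \<in> carrier (U n)"
  then show "\<one>\<^bsub>U n\<^esub> \<otimes>\<^bsub>U n\<^esub> x = x"
    by (auto simp: U_def U_mult_def)
next
  fix x assume xc: "x \<in> carrier (U n)"
  obtain i e where x: "x = (i,e)" by force
  have ie: "i < 2*n" "e < 3" using xc x by (auto simp: U_def)
  define y where "y = ((2*n - i) mod (2*n), if even i then (3 - e) mod 3 else e)"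
  have "y \<in> carrier (U n)" using assms ie by (auto simp: y_def U_def)
  moreover have "y \<otimes>\<^bsub>U n\<^esub> x = \<one>\<^bsub>U n\<^esub>"
  proof -
    have f: "((2*n - i) mod (2*n) + i) mod (2*n) = 0"
      using ie by (metis mod_add_left_eq le_add_diff_inverse2 less_imp_le_nat mod_self)
    have s1: "((3 - e) mod 3 + e) mod 3 = 0"
      using ie by (metis mod_add_left_eq le_add_diff_inverse2 less_imp_le_nat mod_self)
    have s2: "(2 * e + e) mod 3 = 0" by simp
    show ?thesis using f s1 s2 by (simp add: U_def U_mult_def y_def x)
  qed
  ultimately show "\<exists>y\<in>carrier (U n). y \<otimes>\<^bsub>U n\<^esub> x = \<one>\<^bsub>U n\<^esub>" by blast
qed




lemma adj_action:
  fixes G (structure)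
  assumes "group G" "S \<subseteq> carrier G" "g \<in> carrier G" "finite (carrier G)"
  shows "(\<Sum>h\<in>carrier G. cay_adj G S g h * f h) = (\<Sum>s\<in>S. f (s \<otimes> g))"
proof -
  interpret group G by fact
  have "(\<Sum>h\<in>carrier G. cay_adj G S g h * f h) =
        (\<Sum>h\<in>carrier G. if h \<otimes> inv g \<in> S then f h else 0)"
    by (intro sum.cong) (auto simp: cay_adj_def)
  also have "\<dots> = (\<Sum>h\<in>{h\<in>carrier G. h \<otimes> inv g \<in> S}. f h)"
    using assms(4) by (simp add: sum.inter_filter)
  also have "\<dots> = (\<Sum>s\<in>S. f (s \<otimes> g))"
    using assms by (intro sum.reindex_bij_witness[of _ "\<lambda>s. s \<otimes> g" "\<lambda>h. h \<otimes> inv g"])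
      (auto simp: m_assoc)
  finally show ?thesis .
qed

lemma sym_pairing:
  fixes G (structure) and \<phi> f :: "'a \<Rightarrow> complex"
  assumes "group G" "S \<subseteq> carrier G" "(\<lambda>s. inv s) ` S = S" "finite (carrier G)"
  shows "(\<Sum>g\<in>carrier G. \<phi> g * (\<Sum>s\<in>S. f (s \<otimes> g))) =
         (\<Sum>h\<in>carrier G. f h * (\<Sum>s\<in>S. \<phi> (s \<otimes> h)))"
proof -
  interpret group G by fact
  have fS: "finite S" using assms finite_subset by blast
  have "(\<Sum>g\<in>carrier G. \<phi> g * (\<Sum>s\<in>S. f (s \<otimes> g))) =
        (\<Sum>s\<in>S. \<Sum>g\<in>carrier G. \<phi> g * f (s \<otimes> g))"
    unfolding sum_distrib_left by (rule sum.swap)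
  also have "\<dots> = (\<Sum>s\<in>S. \<Sum>h\<in>carrier G. \<phi> (inv s \<otimes> h) * f h)"
  proof (rule sum.cong[OF refl])
    fix s assume "s \<in> S"
    then have sc: "s \<in> carrier G" using assms by auto
    show "(\<Sum>g\<in>carrier G. \<phi> g * f (s \<otimes> g)) = (\<Sum>h\<in>carrier G. \<phi> (inv s \<otimes> h) * f h)"
    proof (rule sum.reindex_bij_witness[of _ "\<lambda>h. inv s \<otimes> h" "\<lambda>g. s \<otimes> g"])
      fix g assume "g \<in> carrier G"
      then show "inv s \<otimes> (s \<otimes> g) = g" "s \<otimes> g \<in> carrier G"
        "\<phi> (inv s \<otimes> (s \<otimes> g)) * f (s \<otimes> g) = \<phi> g * f (s \<otimes> g)"
        using sc by (simp_all add: m_assoc[symmetric])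
    next
      fix h assume "h \<in> carrier G"
      then show "s \<otimes> (inv s \<otimes> h) = h" "inv s \<otimes> h \<in> carrier G"
        using sc by (simp_all add: m_assoc[symmetric])
    qed
  qed
  also have "\<dots> = (\<Sum>h\<in>carrier G. f h * (\<Sum>s\<in>S. \<phi> (inv s \<otimes> h)))"
    by (simp add: sum_distrib_left sum.swap[of _ S] mult.commute)
  also have "\<dots> = (\<Sum>h\<in>carrier G. f h * (\<Sum>s\<in>S. \<phi> (s \<otimes> h)))"
  proof -
    have inj: "inj_on (\<lambda>s. inv s) S"
      by (rule inj_onI) (metis assms(2) inv_inv subsetD)
    have "\<And>h. (\<Sum>s\<in>S. \<phi> (s \<otimes> h)) = (\<Sum>s\<in>S. \<phi> (inv s \<otimes> h))"
    proof -
      fix h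
      have "(\<Sum>s\<in>S. \<phi> (s \<otimes> h)) = (\<Sum>s\<in>(\<lambda>s. inv s) ` S. \<phi> (s \<otimes> h))"
        using assms(3) by simp
      also have "\<dots> = (\<Sum>s\<in>S. \<phi> (inv s \<otimes> h))"
        by (simp add: sum.reindex[OF inj])
      finally show "(\<Sum>s\<in>S. \<phi> (s \<otimes> h)) = (\<Sum>s\<in>S. \<phi> (inv s \<otimes> h))" .
    qed
    then show ?thesis by simp
  qed
  finally show ?thesis .
qed




definition zeta :: complex where "zeta = Complex (-1/2) (sqrt 3 / 2)"

lemma zeta_sq: "zeta^2 = Complex (-1/2) (- sqrt 3 / 2)"
  by (simp add: zeta_def power2_eq_square complex_eq_iff algebra_simps)

lemma zeta_cube: "zeta^3 = 1"
  by (simp add: zeta_def power3_eq_cube complex_eq_iff algebra_simps)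

lemma zeta_sum: "1 + zeta + zeta^2 = 0"
  unfolding zeta_sq by (simp add: zeta_def complex_eq_iff)

lemma zeta_ne1: "zeta \<noteq> 1"
  by (simp add: zeta_def complex_eq_iff)

lemma pow_mod_eq: "(z::complex)^N = 1 \<Longrightarrow> z^(m mod N) = z^m"
proof -
  assume h: "z^N = 1"
  have "z^m = z^(N * (m div N) + m mod N)" by (simp only: mult_div_mod_eq)
  also have "\<dots> = (z^N)^(m div N) * z^(m mod N)" by (simp only: power_add power_mult)
  also have "\<dots> = z^(m mod N)" by (simp add: h)
  finally show ?thesis by metis
qed

lemma zeta_pow_mod: "zeta^m = zeta^(m mod 3)"
  using pow_mod_eq[OF zeta_cube] by simp

lemma zeta_l_cube: "(zeta^l)^3 = 1"
  by (metis power_mult power_mult_distrib power_one zeta_cube mult.commute)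

lemma omega_cis: "omega n = cis (pi / real n)"
  unfolding omega_def cis_conv_exp by (simp add: mult.commute)

lemma omega_pow: "omega n ^ m = cis (real m * pi / real n)"
  unfolding omega_cis DeMoivre by simp

lemma omega_2n: "n \<ge> 1 \<Longrightarrow> omega n ^ (2*n) = 1"
  unfolding omega_pow by simp

lemma omega_n: "n \<ge> 1 \<Longrightarrow> omega n ^ n = -1"
  unfolding omega_pow by simp

lemma omega_nz: "omega n \<noteq> 0"
  unfolding omega_cis by (simp add: cis_neq_zero)

lemma omega_k_2n: "n \<ge> 1 \<Longrightarrow> (omega n ^ k)^(2*n) = 1"
  by (metis omega_2n power_mult power_one mult.commute)

lemma omega_pow_eq1: assumes "n \<ge> 1" "omega n ^ m = 1" shows "2*n dvd m"
proof -
  have "cos (real m * pi / real n) = 1" using assms(2) unfolding omega_pow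
    by (metis cis.sel(1) one_complex.sel(1))
  then obtain N :: int where N: "real m * pi / real n = real_of_int N * 2 * pi"
    using cos_one_2pi_int by blast
  have "real m = real n * (N * 2)" using N assms(1)
    by (simp add: field_simps)
  hence "int m = int n * (N*2)" by (metis of_int_eq_iff of_int_mult of_int_of_nat_eq of_int_numeral)
  hence "int (2*n) dvd int m" by (simp add: mult.commute mult.left_commute)
  thus ?thesis by (simp only: of_nat_dvd_iff)
qed




definition phi :: "nat \<Rightarrow> nat \<Rightarrow> nat \<Rightarrow> nat \<Rightarrow> nat \<times> nat \<Rightarrow> complex" where
 "phi n k l \<pi> x = (if fst x mod 2 = \<pi> then (omega n ^ k)^(fst x) * (zeta^l)^(snd x) else 0)"

definition Ysum :: "nat \<Rightarrow> nat \<Rightarrow> complex \<Rightarrow> (nat \<times> nat) set \<Rightarrow> complex" where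
 "Ysum n k z T = (\<Sum>s\<in>T. (omega n ^ k)^(fst s) * z^(snd s))"

lemma mod2n_mod2: "(m::nat) mod (2*n) mod 2 = m mod 2"
  by (simp add: mod_mod_cancel)

lemma phi_term:
  assumes "n \<ge> 1"
  shows "phi n k l 0 (U_mult n s h) =
     (if even (fst s) then (omega n ^ k)^(fst s) * (zeta^l)^(snd s) else 0) * phi n k l 0 h +
     (if odd (fst s) then (omega n ^ k)^(fst s) * ((zeta^l)^2)^(snd s) else 0) * phi n k l 1 h"
    and "phi n k l 1 (U_mult n s h) =
     (if odd (fst s) then (omega n ^ k)^(fst s) * (zeta^l)^(snd s) else 0) * phi n k l 0 h +
     (if even (fst s) then (omega n ^ k)^(fst s) * ((zeta^l)^2)^(snd s) else 0) * phi n k l 1 h"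
proof -
  obtain p q where s: "s = (p,q)" by force
  obtain i e where h: "h = (i,e)" by force
  define w where "w = omega n ^ k"
  define z where "z = zeta ^ l"
  have w: "w^((p+i) mod (2*n)) = w^p * w^i"
    using pow_mod_eq[OF omega_k_2n[OF assms, of k]] by (simp add: w_def power_add)
  have z1: "z^((q+e) mod 3) = z^q * z^e"
    using pow_mod_eq[OF zeta_l_cube[of l]] by (simp add: z_def power_add)
  have z2: "z^((2*q+e) mod 3) = (z^2)^q * z^e"
    using pow_mod_eq[OF zeta_l_cube[of l]] by (simp add: z_def power_add power_mult)
  have U: "U_mult n s h = ((p+i) mod (2*n), (if even i then q+e else 2*q+e) mod 3)"
    by (simp add: U_mult_def s h)
  have par: "(p+i) mod (2*n) mod 2 = (p+i) mod 2" by (rule mod2n_mod2)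
  show "phi n k l 0 (U_mult n s h) =
     (if even (fst s) then (omega n ^ k)^(fst s) * (zeta^l)^(snd s) else 0) * phi n k l 0 h +
     (if odd (fst s) then (omega n ^ k)^(fst s) * ((zeta^l)^2)^(snd s) else 0) * phi n k l 1 h"
    unfolding U phi_def w_def[symmetric] z_def[symmetric] par
    by (cases "even i"; cases "even p"; simp add: s h w z1 z2 mod2n_mod2 split: if_splits; presburger?)
  show "phi n k l 1 (U_mult n s h) =
     (if odd (fst s) then (omega n ^ k)^(fst s) * (zeta^l)^(snd s) else 0) * phi n k l 0 h +
     (if even (fst s) then (omega n ^ k)^(fst s) * ((zeta^l)^2)^(snd s) else 0) * phi n k l 1 h"
    unfolding U phi_def w_def[symmetric] z_def[symmetric] par
    by (cases "even i"; cases "even p"; simp add: s h w z1 z2 mod2n_mod2 split: if_splits; presburger?)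
qed




lemma split_sum:
  assumes "finite S"
  shows "(\<Sum>s\<in>S. F s) = (\<Sum>s\<in>{x\<in>S. even (fst x)}. F s) + (\<Sum>s\<in>{x\<in>S. odd (fst x)}. F s)"
proof -
  have "(\<Sum>s\<in>S. F s) = (\<Sum>s\<in>S. (if even (fst s) then F s else 0) + (if odd (fst s) then F s else 0))"
    by (intro sum.cong) auto
  also have "\<dots> = (\<Sum>s\<in>{x\<in>S. even (fst x)}. F s) + (\<Sum>s\<in>{x\<in>S. odd (fst x)}. F s)"
    using assms by (simp add: sum.distrib sum.inter_filter)
  finally show ?thesis .
qed

lemma phi_sum:
  assumes "n \<ge> 1" "finite S"
  shows "(\<Sum>s\<in>S. phi n k l 0 (U_mult n s h)) =
           Ysum n k (zeta^l) {x\<in>S. even (fst x)} * phi n k l 0 h +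
           Ysum n k ((zeta^l)^2) {x\<in>S. odd (fst x)} * phi n k l 1 h"
    and "(\<Sum>s\<in>S. phi n k l 1 (U_mult n s h)) =
           Ysum n k (zeta^l) {x\<in>S. odd (fst x)} * phi n k l 0 h +
           Ysum n k ((zeta^l)^2) {x\<in>S. even (fst x)} * phi n k l 1 h"
  unfolding phi_term[OF assms(1)] sum.distrib sum_distrib_right[symmetric] Ysum_def
  using assms(2) by (simp_all add: sum.inter_filter)

lemma zeta_pair:
  assumes "0 < l" "l < 3"
  shows "(zeta^l)^r + ((zeta^l)^2)^r = (if r mod 3 = 0 then 2 else -1)"
proof -
  have a: "(zeta^l)^r = zeta^((l * (r mod 3)) mod 3)"
    by (metis power_mult zeta_pow_mod mod_mult_right_eq)
  have b: "((zeta^l)^2)^r = zeta^((2 * l * (r mod 3)) mod 3)"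
    by (metis power_mult zeta_pow_mod mod_mult_right_eq mult.assoc mult.commute)
  have r3: "r mod 3 = 0 \<or> r mod 3 = 1 \<or> r mod 3 = 2" by auto
  have l3: "l = 1 \<or> l = 2" using assms by auto
  have zs: "zeta + zeta^2 = -1" using zeta_sum by (simp add: algebra_simps eq_neg_iff_add_eq_0)
  have zs2: "zeta + zeta * zeta = -1" using zs by (simp add: power2_eq_square)
  show ?thesis unfolding a b using r3 l3 zs2
    by (elim disjE; simp add: add.commute)
qed

lemma psi_even: "even x \<Longrightarrow> psi n k (x, r) = (if r = 0 then 2 else -1) * (omega n ^ k)^x"
  by (simp add: psi_def power_mult)




context
  fixes n :: nat and S :: "(nat \<times> nat) set"
  assumes n1: "n \<ge> 1" and Sc: "S \<subseteq> carrier (U n)"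
begin

lemma finS: "finite S"
  using Sc by (rule finite_subset) (simp add: U_def)

lemma Sq: "s \<in> S \<Longrightarrow> snd s < 3" using Sc by (auto simp: U_def)

lemma chi_k: "char_set (chi n k) S = Ysum n k 1 {x\<in>S. even (fst x)} + Ysum n k 1 {x\<in>S. odd (fst x)}"
  unfolding char_set_def chi_def Ysum_def using split_sum[OF finS]
  by (simp add: power_mult)

lemma omega_kn: "omega n ^ ((k+n)*p) = (omega n ^ k)^p * (-1)^p"
proof -
  have "omega n ^ ((k+n)*p) = (omega n^k)^p * (omega n^n)^p"
    by (simp only: add_mult_distrib power_add power_mult)
  then show ?thesis by (simp add: omega_n[OF n1])
qed

lemma chi_kn: "char_set (chi n (k+n)) S = Ysum n k 1 {x\<in>S. even (fst x)} - Ysum n k 1 {x\<in>S. odd (fst x)}"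
proof -
  have "char_set (chi n (k+n)) S = (\<Sum>s\<in>{x\<in>S. even (fst x)}. chi n (k+n) s) + (\<Sum>s\<in>{x\<in>S. odd (fst x)}. chi n (k+n) s)"
    unfolding char_set_def by (rule split_sum[OF finS])
  also have "(\<Sum>s\<in>{x\<in>S. even (fst x)}. chi n (k+n) s) = Ysum n k 1 {x\<in>S. even (fst x)}"
    unfolding Ysum_def chi_def
    by (intro sum.cong) (auto simp: omega_kn)
  also have "(\<Sum>s\<in>{x\<in>S. odd (fst x)}. chi n (k+n) s) = - Ysum n k 1 {x\<in>S. odd (fst x)}"
    unfolding Ysum_def chi_def sum_negf[symmetric]
    by (intro sum.cong) (auto simp: omega_kn)
  finally show ?thesis by simp
qed

lemma psi_t:
  assumes "0 < l" "l < 3"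
  shows "Ysum n k (zeta^l) {x\<in>S. even (fst x)} + Ysum n k ((zeta^l)^2) {x\<in>S. even (fst x)}
         = char_set (psi n k) {x\<in>S. even (fst x)}"
  unfolding Ysum_def char_set_def sum.distrib[symmetric]
proof (rule sum.cong[OF refl])
  fix s assume s: "s \<in> {x\<in>S. even (fst x)}"
  obtain p q where pq: "s = (p,q)" by force
  have q3: "q < 3" using Sq s pq by auto
  have "(omega n ^ k) ^ p * (zeta ^ l) ^ q + (omega n ^ k) ^ p * ((zeta ^ l)\<^sup>2) ^ q
        = (omega n ^ k) ^ p * ((zeta ^ l) ^ q + ((zeta ^ l)\<^sup>2) ^ q)" by (simp add: algebra_simps)
  also have "\<dots> = (if q = 0 then 2 else -1) * (omega n ^ k) ^ p"
    using zeta_pair[OF assms, of q] q3 by simp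
  also have "\<dots> = psi n k s" using s pq by (simp add: psi_even)
  finally show "(omega n ^ k) ^ fst s * (zeta ^ l) ^ snd s + (omega n ^ k) ^ fst s * ((zeta ^ l)\<^sup>2) ^ snd s
        = psi n k s" by (simp add: pq)
qed

lemma wmod: "(omega n ^ k)^((p1 + p2) mod (2*n)) = (omega n ^ k)^p1 * (omega n ^ k)^p2"
  using pow_mod_eq[OF omega_k_2n[OF n1, of k]] by (simp add: power_add)

lemma psi_Q1:
  assumes "0 < l" "l < 3"
  shows "char_sq (U n) (psi n k) {x\<in>S. even (fst x)} =
           (Ysum n k (zeta^l) {x\<in>S. even (fst x)})^2 + (Ysum n k ((zeta^l)^2) {x\<in>S. even (fst x)})^2"
proof -
  define z where "z = zeta^l"
  define w where "w = omega n ^ k"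
  define T where "T = {x\<in>S. even (fst x)}"
  define A where "A x = w^(fst x) * z^(snd x)" for x :: "nat \<times> nat"
  define B where "B x = w^(fst x) * (z^2)^(snd x)" for x :: "nat \<times> nat"
  have tm: "psi n k (x1 \<otimes>\<^bsub>U n\<^esub> x2) = A x1 * A x2 + B x1 * B x2"
    if "x1 \<in> T" "x2 \<in> T" for x1 x2
  proof -
    obtain p1 q1 where 1: "x1 = (p1,q1)" by force
    obtain p2 q2 where 2: "x2 = (p2,q2)" by force
    have e: "even p1" "even p2" using that 1 2 by (auto simp: T_def)
    have m: "x1 \<otimes>\<^bsub>U n\<^esub> x2 = ((p1+p2) mod (2*n), (q1+q2) mod 3)"
      using e by (simp add: U_def U_mult_def 1 2)
    have ev: "even ((p1+p2) mod (2*n))" using e by (simp add: even_mod_2n)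
    have "psi n k (x1 \<otimes>\<^bsub>U n\<^esub> x2) = (if (q1+q2) mod 3 = 0 then 2 else -1) * (w^p1 * w^p2)"
      unfolding m psi_even[OF ev] wmod w_def by simp
    also have "\<dots> = (z^(q1+q2) + (z^2)^(q1+q2)) * (w^p1 * w^p2)"
      using zeta_pair[OF assms, of "q1+q2"] by (simp add: z_def)
    also have "\<dots> = A x1 * A x2 + B x1 * B x2"
      by (simp add: A_def B_def 1 2 power_add algebra_simps)
    finally show ?thesis .
  qed
  have "char_sq (U n) (psi n k) T = (\<Sum>x1\<in>T. \<Sum>x2\<in>T. A x1 * A x2 + B x1 * B x2)"
    unfolding char_sq_def by (intro sum.cong refl) (simp add: tm)
  also have "\<dots> = (sum A T)^2 + (sum B T)^2"
    by (simp add: sum.distrib power2_eq_square sum_product)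
  finally show ?thesis by (simp add: T_def Ysum_def A_def B_def z_def w_def)
qed

lemma psi_Q2:
  assumes "0 < l" "l < 3"
  shows "char_sq (U n) (psi n k) {x\<in>S. odd (fst x)} =
           2 * Ysum n k ((zeta^l)^2) {x\<in>S. odd (fst x)} * Ysum n k (zeta^l) {x\<in>S. odd (fst x)}"
proof -
  define z where "z = zeta^l"
  define w where "w = omega n ^ k"
  define T where "T = {x\<in>S. odd (fst x)}"
  define A where "A x = w^(fst x) * z^(snd x)" for x :: "nat \<times> nat"
  define B where "B x = w^(fst x) * (z^2)^(snd x)" for x :: "nat \<times> nat"
  have z3: "z^3 = 1" unfolding z_def by (rule zeta_l_cube)
  have tm: "psi n k (x1 \<otimes>\<^bsub>U n\<^esub> x2) = B x1 * A x2 + A x1 * B x2"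
    if "x1 \<in> T" "x2 \<in> T" for x1 x2
  proof -
    obtain p1 q1 where 1: "x1 = (p1,q1)" by force
    obtain p2 q2 where 2: "x2 = (p2,q2)" by force
    have e: "odd p1" "odd p2" using that 1 2 by (auto simp: T_def)
    have m: "x1 \<otimes>\<^bsub>U n\<^esub> x2 = ((p1+p2) mod (2*n), (2*q1+q2) mod 3)"
      using e by (simp add: U_def U_mult_def 1 2)
    have ev: "even ((p1+p2) mod (2*n))" using e by (simp add: even_mod_2n)
    have "psi n k (x1 \<otimes>\<^bsub>U n\<^esub> x2) = (if (2*q1+q2) mod 3 = 0 then 2 else -1) * (w^p1 * w^p2)"
      unfolding m psi_even[OF ev] wmod w_def by simp
    also have "\<dots> = (z^(2*q1+q2) + (z^2)^(2*q1+q2)) * (w^p1 * w^p2)"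
      using zeta_pair[OF assms, of "2*q1+q2"] by (simp add: z_def)
    also have "(z^2)^(2*q1+q2) = z^q1 * (z^2)^q2"
    proof -
      have "(z^2)^(2*q1+q2) = (z^3)^q1 * z^q1 * (z^2)^q2"
        by (simp add: power_add flip: power_mult) (simp add: power_add[symmetric] mult.commute)
      then show ?thesis by (simp add: z3)
    qed
    also have "(z^(2*q1+q2) + z^q1 * (z^2)^q2) * (w^p1 * w^p2) = B x1 * A x2 + A x1 * B x2"
      by (simp add: A_def B_def 1 2 power_add algebra_simps flip: power_mult)
    finally show ?thesis .
  qed
  have "char_sq (U n) (psi n k) T = (\<Sum>x1\<in>T. \<Sum>x2\<in>T. B x1 * A x2 + A x1 * B x2)"
    unfolding char_sq_def by (intro sum.cong refl) (simp add: tm)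
  also have "\<dots> = sum B T * sum A T + sum A T * sum B T"
    by (simp add: sum.distrib sum_product)
  also have "\<dots> = 2 * sum B T * sum A T" by simp
  finally show ?thesis by (simp add: T_def Ysum_def A_def B_def z_def w_def)
qed

end



lemma omega_sum:
  assumes n1: "n \<ge> 1" and i: "i < 2*n" "i0 < 2*n" "i mod 2 = i0 mod 2"
  shows "(\<Sum>k<n. (omega n ^ (i + 2*n - i0))^k) = (if i = i0 then of_nat n else 0)"
proof (cases "i = i0")
  case True
  then show ?thesis using omega_2n[OF n1] by simp
next
  case False
  define m where "m = i + 2*n - i0"
  define z where "z = omega n ^ m"
  have "even m" using i unfolding m_def by presburger
  then obtain m' where m': "m = 2*m'" by blast
  have zn: "z^n = 1" unfolding z_def m'
    by (metis omega_2n[OF n1] power_mult power_one mult.commute mult.left_commute)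
  have "z \<noteq> 1"
  proof
    assume "z = 1"
    then have "2*n dvd m" using omega_pow_eq1[OF n1, of m] z_def by simp
    then obtain c where c: "m = 2*n*c" by blast
    have "m > 0" "m < 4*n" using i unfolding m_def by auto
    then have "c \<noteq> 0" using c by auto
    moreover have "2*n*c < 2*n*2" using \<open>m < 4*n\<close> c by simp
    then have "c < 2" by (simp only: mult_less_cancel1)
    ultimately have "c = 1" by simp
    then show False using c False i unfolding m_def by auto
  qed
  then have "(\<Sum>k<n. z^k) = 0" using geometric_sum[of z n] zn by simp
  then show ?thesis using False by (simp add: z_def m_def)
qed

lemma zeta_sum3:
  assumes "e < 3" "e0 < 3"
  shows "(\<Sum>l<3. (zeta ^ (e + 3 - e0))^l) = (if e = e0 then 3 else 0)"
proof -
  define r where "r = (e + 3 - e0) mod 3"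
  have zr: "zeta ^ (e + 3 - e0) = zeta ^ r" unfolding r_def by (rule zeta_pow_mod)
  have r: "r = 0 \<longleftrightarrow> e = e0" using assms unfolding r_def by presburger
  have r3: "r = 0 \<or> r = 1 \<or> r = 2" unfolding r_def by auto
  have s: "(\<Sum>l<3. x^l) = 1 + x + x^2" for x :: complex
    by (simp add: numeral_3_eq_3 power2_eq_square)
  have z4: "zeta^4 = zeta" using zeta_cube by (metis mult.right_neutral power_add numeral_Bit0 numeral_One one_plus_numeral power_one_right semiring_norm(2) numeral_plus_numeral semiring_norm(4) add.commute)
  show ?thesis unfolding zr s using r3 r zeta_sum
    by (elim disjE) (auto simp flip: power_mult simp: z4 algebra_simps)
qed

lemma inversion:
  assumes n1: "n \<ge> 1"
    and P0: "\<forall>\<pi><2. \<forall>k<n. \<forall>l<3. (\<Sum>g\<in>carrier (U n). phi n k l \<pi> g * f g) = 0"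
    and g0: "g0 \<in> carrier (U n)"
  shows "f g0 = 0"
proof -
  obtain i0 e0 where g0e: "g0 = (i0,e0)" by force
  have i0: "i0 < 2*n" "e0 < 3" using g0 g0e by (auto simp: U_def)
  define \<pi>0 where "\<pi>0 = i0 mod 2"
  define V where "V = carrier (U n)"
  have finV: "finite V" by (simp add: V_def U_def)
  define K where "K g = (\<Sum>k<n. \<Sum>l<3. (omega n^k)^(2*n-i0) * (zeta^l)^(3-e0) * phi n k l \<pi>0 g)" for g
  have K: "K g = (if g = g0 then of_nat (3*n) else 0)" if gV: "g \<in> V" for g
  proof -
    obtain i e where ge: "g = (i,e)" by force
    have ie: "i < 2*n" "e < 3" using gV ge by (auto simp: U_def V_def)
    show ?thesis
    proof (cases "i mod 2 = \<pi>0")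
      case False
      then have "g \<noteq> g0" using ge g0e \<pi>0_def by auto
      then show ?thesis using False by (simp add: K_def phi_def ge)
    next
      case True
      have "K g = (\<Sum>k<n. \<Sum>l<3. (omega n ^ (i + 2*n - i0))^k * (zeta ^ (e + 3 - e0))^l)"
        unfolding K_def
      proof (intro sum.cong refl)
        fix k l
        have pc: "(x^a)^b = (x^b)^a" for x :: complex and a b
          by (simp add: power_mult[symmetric] mult.commute)
        have e1: "i + 2*n - i0 = (2*n - i0) + i" using i0 by simp
        have e2: "e + 3 - e0 = (3 - e0) + e" using i0 by simp
        have a: "(omega n^k)^(2*n-i0) * (omega n^k)^i = (omega n ^ (i + 2*n - i0))^k"
          unfolding e1 power_add power_mult_distrib by (simp add: pc)
        have b: "(zeta^l)^(3-e0) * (zeta^l)^e = (zeta ^ (e + 3 - e0))^l"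
          unfolding e2 power_add power_mult_distrib by (simp add: pc)
        show "(omega n^k)^(2*n-i0) * (zeta^l)^(3-e0) * phi n k l \<pi>0 g =
              (omega n ^ (i + 2*n - i0))^k * (zeta ^ (e + 3 - e0))^l"
          using True a b by (simp add: phi_def ge algebra_simps)
      qed
      also have "\<dots> = (\<Sum>k<n. (omega n ^ (i + 2*n - i0))^k) * (\<Sum>l<3. (zeta ^ (e + 3 - e0))^l)"
        by (simp add: sum_product)
      also have "\<dots> = (if i = i0 then of_nat n else 0) * (if e = e0 then 3 else 0)"
        using omega_sum[OF n1 ie(1) i0(1)] True zeta_sum3[OF ie(2) i0(2)] \<pi>0_def by simp
      also have "\<dots> = (if g = g0 then of_nat (3*n) else 0)" using ge g0e by simp
      finally show ?thesis .
    qed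
  qed
  have "0 = (\<Sum>k<n. \<Sum>l<3. (omega n^k)^(2*n-i0) * (zeta^l)^(3-e0) * (\<Sum>g\<in>V. phi n k l \<pi>0 g * f g))"
    using P0 \<pi>0_def V_def by simp
  also have "\<dots> = (\<Sum>g\<in>V. f g * K g)"
    by (simp add: K_def sum_distrib_left sum_distrib_right sum.swap[where A=V] mult_ac)
  also have "\<dots> = (\<Sum>g\<in>V. if g = g0 then of_nat (3*n) * f g0 else 0)"
    by (intro sum.cong refl) (simp add: K)
  also have "\<dots> = of_nat (3*n) * f g0" using g0 finV V_def by simp
  finally show ?thesis using n1 by simp
qed




lemma root_from_P:
  fixes c a00 a01 a10 a11 P0 P1 :: complex
  assumes "c*P0 = a00*P0 + a01*P1" "c*P1 = a10*P0 + a11*P1" "P0 \<noteq> 0 \<or> P1 \<noteq> 0"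
  shows "(c-a00)*(c-a11) = a01*a10"
proof -
  have e0: "(c-a00)*P0 = a01*P1" using assms(1) by (simp add: algebra_simps)
  have e1: "(c-a11)*P1 = a10*P0" using assms(2) by (simp add: algebra_simps)
  show ?thesis
  proof (cases "P0 = 0")
    case False
    have "(c-a00)*(c-a11)*P0 = a01*a10*P0"
      by (metis e0 e1 mult.assoc mult.commute)
    then show ?thesis using False by simp
  next
    case True
    then have "P1 \<noteq> 0" using assms(3) by simp
    have "(c-a00)*(c-a11)*P1 = a01*a10*P1"
      by (metis e0 e1 mult.assoc mult.commute)
    then show ?thesis using \<open>P1 \<noteq> 0\<close> by simp
  qed
qed

lemma int_root:
  fixes c a00 a01 a10 a11 :: complex and T Q m :: int
  assumes r: "(c-a00)*(c-a11) = a01*a10"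
    and t: "a00 + a11 = of_int T"
    and q: "a00^2 + a11^2 + 2*a01*a10 = of_int Q"
    and m: "2 * of_int Q - (of_int T)^2 = (of_int (m^2) :: complex)"
  shows "c \<in> \<int>"
proof -
  have id1: "(2*c - (a00+a11))^2 = 4*((c-a00)*(c-a11)) + (a00-a11)^2"
    by (simp add: power2_eq_square algebra_simps)
  have id2: "2*(a00^2 + a11^2 + 2*a01*a10) - (a00+a11)^2 = (a00-a11)^2 + 4*(a01*a10)"
    by (simp add: power2_eq_square algebra_simps)
  have "(2*c - of_int T)^2 = 2 * of_int Q - (of_int T)^2"
    unfolding t[symmetric] q[symmetric] id1 id2 r by simp
  also have "\<dots> = (of_int m)^2" using m by simp
  finally have "(2*c - of_int T - of_int m) * (2*c - of_int T + of_int m) = 0"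
    by (simp add: power2_eq_square algebra_simps)
  then have "2*c - of_int T - of_int m = 0 \<or> 2*c - of_int T + of_int m = 0"
    by (simp only: mult_eq_0_iff)
  then have c2: "2*c = of_int (T + m) \<or> 2*c = of_int (T - m)"
  proof
    assume "2*c - of_int T - of_int m = 0"
    then have "2*c = of_int T + of_int m" by (simp add: algebra_simps)
    then show ?thesis by simp
  next
    assume "2*c - of_int T + of_int m = 0"
    then have "2*c = of_int T - of_int m" by (simp add: algebra_simps)
    then show ?thesis by simp
  qed
  have "of_int (m^2) = (of_int (2*Q - T^2) :: complex)" using m by simp
  then have mi: "m^2 = 2*Q - T^2" by (simp only: of_int_eq_iff)
  have ev: "even (T + m)" "even (T - m)"
  proof -
    have "even (m^2 + T^2)" using mi by simp
    then show "even (T + m)" "even (T - m)" by (auto simp: power2_eq_square)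
  qed
  from c2 show ?thesis
  proof
    assume h: "2*c = of_int (T+m)"
    obtain u where "T + m = 2*u" using ev by blast
    then have "c = of_int u" using h by simp
    then show ?thesis by simp
  next
    assume h: "2*c = of_int (T-m)"
    obtain u where "T - m = 2*u" using ev by blast
    then have "c = of_int u" using h by simp
    then show ?thesis by simp
  qed
qed

lemma left_null:
  fixes l a00 a01 a10 a11 :: complex
  assumes "(l-a00)*(l-a11) = a01*a10"
  shows "\<exists>x0 x1. (x0 \<noteq> 0 \<or> x1 \<noteq> 0) \<and> x0*a00 + x1*a10 = l*x0 \<and> x0*a01 + x1*a11 = l*x1"
proof (cases "a10 \<noteq> 0 \<or> a00 - l \<noteq> 0")
  case True
  show ?thesis
    by (rule exI[of _ a10], rule exI[of _ "-(a00-l)"]) (use True assms in \<open>auto simp: algebra_simps\<close>)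
next
  case False
  show ?thesis
  proof (cases "a11 - l \<noteq> 0 \<or> a01 \<noteq> 0")
    case True
    show ?thesis
      by (rule exI[of _ "a11-l"], rule exI[of _ "-a01"]) (use True False in \<open>auto simp: algebra_simps\<close>)
  next
    case False2: False
    show ?thesis
      by (rule exI[of _ 1], rule exI[of _ 0]) (use False False2 in auto)
  qed
qed

lemma quad_roots:
  fixes a00 a01 a10 a11 :: complex
  shows "\<exists>l1 l2. (l1-a00)*(l1-a11) = a01*a10 \<and> (l2-a00)*(l2-a11) = a01*a10 \<and>
     l1 + l2 = a00 + a11 \<and> l1*l2 = a00*a11 - a01*a10"
proof -
  define t where "t = a00 + a11"
  define d where "d = a00*a11 - a01*a10"
  define r where "r = csqrt (t^2 - 4*d)"
  have r2: "r^2 = t^2 - 4*d" unfolding r_def by simp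
  define l1 where "l1 = (t + r)/2"
  define l2 where "l2 = (t - r)/2"
  have s: "l1 + l2 = t" unfolding l1_def l2_def by (simp add: field_simps)
  have p: "l1 * l2 = d" unfolding l1_def l2_def using r2
    by (simp add: field_simps power2_eq_square)
  have "(x-a00)*(x-a11) - a01*a10 = x^2 - t*x + d" for x
    by (simp add: t_def d_def power2_eq_square algebra_simps)
  moreover have "l1^2 - t*l1 + d = 0" "l2^2 - t*l2 + d = 0"
    using s p by (simp_all add: power2_eq_square algebra_simps flip: s)
  ultimately show ?thesis using s p t_def d_def
    by (metis eq_iff_diff_eq_0)
qed




definition A00 where "A00 n S k l = Ysum n k (zeta^l) {x\<in>S. even (fst x)}"
definition A01 where "A01 n S k l = Ysum n k ((zeta^l)^2) {x\<in>S. odd (fst x)}"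
definition A10 where "A10 n S k l = Ysum n k (zeta^l) {x\<in>S. odd (fst x)}"
definition A11 where "A11 n S k l = Ysum n k ((zeta^l)^2) {x\<in>S. even (fst x)}"

lemma U_mult_eq: "x \<otimes>\<^bsub>U n\<^esub> y = U_mult n x y" by (simp add: U_def)

context
  fixes n :: nat and S :: "(nat \<times> nat) set"
  assumes n1: "n \<ge> 1" and Sc: "S \<subseteq> carrier (U n)"
    and Sinv: "(\<lambda>s. inv\<^bsub>U n\<^esub> s) ` S = S"
begin

lemma grp: "group (U n)" by (rule U_group[OF n1])
lemma finV: "finite (carrier (U n))" by (simp add: U_def)
lemma finS': "finite S" using Sc finV finite_subset by blast

lemma act0: "(\<Sum>s\<in>S. phi n k l 0 (s \<otimes>\<^bsub>U n\<^esub> h)) = A00 n S k l * phi n k l 0 h + A01 n S k l * phi n k l 1 h"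
  unfolding U_mult_eq A00_def A01_def by (rule phi_sum(1)[OF n1 finS'])
lemma act1: "(\<Sum>s\<in>S. phi n k l 1 (s \<otimes>\<^bsub>U n\<^esub> h)) = A10 n S k l * phi n k l 0 h + A11 n S k l * phi n k l 1 h"
  unfolding U_mult_eq A10_def A11_def by (rule phi_sum(2)[OF n1 finS'])

lemma eig:
  assumes "(lam - A00 n S k l)*(lam - A11 n S k l) = A01 n S k l * A10 n S k l"
  shows "mat_eigenvalue (carrier (U n)) (cay_adj (U n) S) lam"
proof -
  obtain x0 x1 where x: "x0 \<noteq> 0 \<or> x1 \<noteq> 0"
    "x0 * A00 n S k l + x1 * A10 n S k l = lam * x0"
    "x0 * A01 n S k l + x1 * A11 n S k l = lam * x1"
    using left_null[OF assms] by blast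
  define f where "f g = x0 * phi n k l 0 g + x1 * phi n k l 1 g" for g
  have nz: "\<exists>v\<in>carrier (U n). f v \<noteq> 0"
  proof (cases "x0 \<noteq> 0")
    case True
    have "(0,0) \<in> carrier (U n)" using n1 by (simp add: U_def)
    moreover have "f (0,0) = x0" by (simp add: f_def phi_def)
    ultimately show ?thesis using True by blast
  next
    case False
    then have "x1 \<noteq> 0" using x(1) by simp
    have "(1,0) \<in> carrier (U n)" using n1 by (simp add: U_def)
    moreover have "f (1,0) = x1 * omega n ^ k" using False by (simp add: f_def phi_def)
    moreover have "x1 * omega n ^ k \<noteq> 0" using \<open>x1 \<noteq> 0\<close> omega_nz[of n] by simp
    ultimately show ?thesis by metis
  qed
  have "\<forall>g\<in>carrier (U n). (\<Sum>h\<in>carrier (U n). cay_adj (U n) S g h * f h) = lam * f g"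
  proof
    fix g assume g: "g \<in> carrier (U n)"
    have "(\<Sum>h\<in>carrier (U n). cay_adj (U n) S g h * f h) = (\<Sum>s\<in>S. f (s \<otimes>\<^bsub>U n\<^esub> g))"
      by (rule adj_action[OF grp Sc g finV])
    also have "\<dots> = x0 * (\<Sum>s\<in>S. phi n k l 0 (s \<otimes>\<^bsub>U n\<^esub> g)) + x1 * (\<Sum>s\<in>S. phi n k l 1 (s \<otimes>\<^bsub>U n\<^esub> g))"
      by (simp add: f_def sum.distrib sum_distrib_left)
    also have "\<dots> = (x0 * A00 n S k l + x1 * A10 n S k l) * phi n k l 0 g + (x0 * A01 n S k l + x1 * A11 n S k l) * phi n k l 1 g"
      unfolding act0 act1 by (simp add: algebra_simps)
    also have "\<dots> = lam * f g" unfolding x(2) x(3) f_def by (simp add: algebra_simps)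
    finally show "(\<Sum>h\<in>carrier (U n). cay_adj (U n) S g h * f h) = lam * f g" .
  qed
  then show ?thesis unfolding mat_eigenvalue_def using nz by blast
qed

lemma root:
  assumes "mat_eigenvalue (carrier (U n)) (cay_adj (U n) S) c"
  shows "\<exists>k<n. \<exists>l<3. (c - A00 n S k l)*(c - A11 n S k l) = A01 n S k l * A10 n S k l"
proof -
  obtain f v where v: "v \<in> carrier (U n)" "f v \<noteq> 0"
    and eq: "\<And>g. g \<in> carrier (U n) \<Longrightarrow> (\<Sum>h\<in>carrier (U n). cay_adj (U n) S g h * f h) = c * f g"
    using assms unfolding mat_eigenvalue_def by blast
  obtain \<pi> k l where kl: "\<pi> < 2" "k < n" "l < 3" and Pnz: "(\<Sum>g\<in>carrier (U n). phi n k l \<pi> g * f g) \<noteq> 0"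
    using inversion[OF n1 _ v(1), of f] v(2) by blast
  define P where "P p = (\<Sum>g\<in>carrier (U n). phi n k l p g * f g)" for p
  have key: "c * P p = (\<Sum>h\<in>carrier (U n). f h * (\<Sum>s\<in>S. phi n k l p (s \<otimes>\<^bsub>U n\<^esub> h)))" for p
  proof -
    have "c * P p = (\<Sum>g\<in>carrier (U n). phi n k l p g * (c * f g))"
      by (simp add: P_def sum_distrib_left algebra_simps)
    also have "\<dots> = (\<Sum>g\<in>carrier (U n). phi n k l p g * (\<Sum>s\<in>S. f (s \<otimes>\<^bsub>U n\<^esub> g)))"
      by (intro sum.cong refl) (simp add: eq[symmetric] adj_action[OF grp Sc _ finV])
    also have "\<dots> = (\<Sum>h\<in>carrier (U n). f h * (\<Sum>s\<in>S. phi n k l p (s \<otimes>\<^bsub>U n\<^esub> h)))"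
      by (rule sym_pairing[OF grp Sc Sinv finV])
    finally show ?thesis .
  qed
  have e0: "c * P 0 = A00 n S k l * P 0 + A01 n S k l * P 1"
    unfolding key act0 by (simp add: P_def sum.distrib sum_distrib_left algebra_simps)
  have e1: "c * P 1 = A10 n S k l * P 0 + A11 n S k l * P 1"
    unfolding key act1 by (simp add: P_def sum.distrib sum_distrib_left algebra_simps)
  have "P 0 \<noteq> 0 \<or> P 1 \<noteq> 0" using Pnz kl(1) P_def by (cases \<pi>) auto
  then show ?thesis using root_from_P[OF e0 e1] kl by blast
qed

end



theorem theorem3p1:
  fixes n :: nat and S :: "(nat \<times> nat) set"
  assumes "n \<ge> 1"
    and "S \<subseteq> carrier (U n)"
    and "\<one>\<^bsub>U n\<^esub> \<notin> S"
    and "(\<lambda>s. inv\<^bsub>U n\<^esub> s) ` S = S"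
  defines "S1 \<equiv> {x \<in> S. even (fst x)}"
    and "S2 \<equiv> {x \<in> S. odd (fst x)}"
  shows "integral_cayley (U n) S \<longleftrightarrow>
    (\<forall>j<2 * n. \<forall>k<n.
       char_set (chi n j) S \<in> \<int> \<and>
       char_set (psi n k) S1 \<in> \<int> \<and>
       char_sq (U n) (psi n k) S1 + char_sq (U n) (psi n k) S2 \<in> \<int> \<and>
       (\<exists>m :: int. 2 * (char_sq (U n) (psi n k) S1 + char_sq (U n) (psi n k) S2)
                     - (char_set (psi n k) S1)\<^sup>2 = of_int (m\<^sup>2)))"
proof -
  note n1 = assms(1) and Sc = assms(2) and Sinv = assms(4)
  have tq: "A00 n S k l + A11 n S k l = char_set (psi n k) S1" if "0 < l" "l < 3" for k l
    unfolding A00_def A11_def S1_def by (rule psi_t[OF n1 Sc that])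
  have qq: "char_sq (U n) (psi n k) S1 + char_sq (U n) (psi n k) S2 =
      (A00 n S k l)^2 + (A11 n S k l)^2 + 2 * A01 n S k l * A10 n S k l" if "0 < l" "l < 3" for k l
    unfolding A00_def A11_def A01_def A10_def S1_def S2_def psi_Q1[OF n1 Sc that] psi_Q2[OF n1 Sc that]
    by simp
  define X1 where "X1 k = Ysum n k 1 S1" for k
  define X2 where "X2 k = Ysum n k 1 S2" for k
  have l0: "A00 n S k 0 = X1 k" "A11 n S k 0 = X1 k" "A01 n S k 0 = X2 k" "A10 n S k 0 = X2 k" for k
    by (simp_all add: A00_def A11_def A01_def A10_def X1_def X2_def S1_def S2_def)
  have ck: "char_set (chi n k) S = X1 k + X2 k" for k
    unfolding X1_def X2_def S1_def S2_def by (rule chi_k[OF n1 Sc])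
  have ckn: "char_set (chi n (k+n)) S = X1 k - X2 k" for k
    unfolding X1_def X2_def S1_def S2_def by (rule chi_kn[OF n1 Sc])
  show ?thesis
  proof
    assume int: "integral_cayley (U n) S"
    have I: "lam \<in> \<int>" if "(lam - A00 n S k l)*(lam - A11 n S k l) = A01 n S k l * A10 n S k l" for lam k l
      using int eig[OF n1 Sc Sinv that] unfolding integral_cayley_def by blast
    show "\<forall>j<2 * n. \<forall>k<n.
       char_set (chi n j) S \<in> \<int> \<and>
       char_set (psi n k) S1 \<in> \<int> \<and>
       char_sq (U n) (psi n k) S1 + char_sq (U n) (psi n k) S2 \<in> \<int> \<and>
       (\<exists>m :: int. 2 * (char_sq (U n) (psi n k) S1 + char_sq (U n) (psi n k) S2)
                     - (char_set (psi n k) S1)\<^sup>2 = of_int (m\<^sup>2))"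
    proof (intro allI impI conjI)
      fix j k assume j: "j < 2*n" and k: "k < n"
      show "char_set (chi n j) S \<in> \<int>"
      proof (cases "j < n")
        case True
        show ?thesis unfolding ck by (rule I[of _ j 0]) (simp add: l0)
      next
        case False
        then have jj: "(j - n) + n = j" by simp
        have "char_set (chi n ((j - n) + n)) S \<in> \<int>" unfolding ckn by (rule I[of _ "j-n" 0]) (simp add: l0)
        then show ?thesis unfolding jj .
      qed
      obtain l1 l2 where r: "(l1 - A00 n S k 1)*(l1 - A11 n S k 1) = A01 n S k 1 * A10 n S k 1"
        "(l2 - A00 n S k 1)*(l2 - A11 n S k 1) = A01 n S k 1 * A10 n S k 1"
        "l1 + l2 = A00 n S k 1 + A11 n S k 1"
        "l1 * l2 = A00 n S k 1 * A11 n S k 1 - A01 n S k 1 * A10 n S k 1"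
        using quad_roots by blast
      obtain a where a: "l1 = of_int a" using I[OF r(1)] Ints_cases by blast
      obtain b where b: "l2 = of_int b" using I[OF r(2)] Ints_cases by blast
      have t: "char_set (psi n k) S1 = of_int (a + b)" using tq[of 1 k] r(3) a b by simp
      have Q: "char_sq (U n) (psi n k) S1 + char_sq (U n) (psi n k) S2 = of_int (a^2 + b^2)"
      proof -
        have "char_sq (U n) (psi n k) S1 + char_sq (U n) (psi n k) S2
            = (A00 n S k 1 + A11 n S k 1)^2 - 2 * (A00 n S k 1 * A11 n S k 1 - A01 n S k 1 * A10 n S k 1)"
          using qq[of 1 k] by (simp add: power2_eq_square algebra_simps)
        also have "\<dots> = (l1 + l2)^2 - 2 * (l1 * l2)" using r(3,4) by simp
        also have "\<dots> = of_int (a^2 + b^2)" using a b by (simp add: power2_eq_square algebra_simps)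
        finally show ?thesis .
      qed
      show "char_set (psi n k) S1 \<in> \<int>" using t by simp
      show "char_sq (U n) (psi n k) S1 + char_sq (U n) (psi n k) S2 \<in> \<int>" using Q by simp
      show "\<exists>m :: int. 2 * (char_sq (U n) (psi n k) S1 + char_sq (U n) (psi n k) S2)
                     - (char_set (psi n k) S1)\<^sup>2 = of_int (m\<^sup>2)"
        by (rule exI[of _ "a - b"]) (simp add: t Q power2_eq_square algebra_simps)
    qed
  next
    assume C: "\<forall>j<2 * n. \<forall>k<n.
       char_set (chi n j) S \<in> \<int> \<and>
       char_set (psi n k) S1 \<in> \<int> \<and>
       char_sq (U n) (psi n k) S1 + char_sq (U n) (psi n k) S2 \<in> \<int> \<and>
       (\<exists>m :: int. 2 * (char_sq (U n) (psi n k) S1 + char_sq (U n) (psi n k) S2)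
                     - (char_set (psi n k) S1)\<^sup>2 = of_int (m\<^sup>2))"
    show "integral_cayley (U n) S" unfolding integral_cayley_def
    proof (intro allI impI)
      fix c assume ev: "mat_eigenvalue (carrier (U n)) (cay_adj (U n) S) c"
      obtain k l where kl: "k < n" "l < 3"
        and r: "(c - A00 n S k l)*(c - A11 n S k l) = A01 n S k l * A10 n S k l"
        using root[OF n1 Sc Sinv ev] by blast
      have h0: "(0::nat) < 2*n" using n1 by simp
      have Ck: "char_set (chi n j) S \<in> \<int>" if "j < 2*n" for j using C that kl(1) by blast
      have Cp: "char_set (psi n k) S1 \<in> \<int> \<and>
       char_sq (U n) (psi n k) S1 + char_sq (U n) (psi n k) S2 \<in> \<int> \<and>
       (\<exists>m :: int. 2 * (char_sq (U n) (psi n k) S1 + char_sq (U n) (psi n k) S2)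
                     - (char_set (psi n k) S1)\<^sup>2 = of_int (m\<^sup>2))"
        using conjunct2[OF C[rule_format, OF h0 kl(1)]] .
      show "c \<in> \<int>"
      proof (cases "l = 0")
        case True
        then have "(c - X1 k)^2 = (X2 k)^2" using r by (simp add: l0 power2_eq_square)
        then have "c - X1 k = X2 k \<or> c - X1 k = - X2 k" by (simp add: power2_eq_iff)
        then have "c = X1 k + X2 k \<or> c = X1 k - X2 k"
          by (auto simp: algebra_simps)
        then have "c = char_set (chi n k) S \<or> c = char_set (chi n (k+n)) S"
          using ck[of k] ckn[of k] by metis
        moreover have "k < 2*n" "k + n < 2*n" using kl by auto
        ultimately show ?thesis using Ck by blast
      next
        case False
        then have l: "0 < l" "l < 3" using kl by auto
        obtain T where T: "char_set (psi n k) S1 = of_int T" using Cp Ints_cases by blast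
        obtain Q where Q: "char_sq (U n) (psi n k) S1 + char_sq (U n) (psi n k) S2 = of_int Q"
          using Cp Ints_cases by blast
        obtain m :: int where m: "2 * (char_sq (U n) (psi n k) S1 + char_sq (U n) (psi n k) S2)
                     - (char_set (psi n k) S1)\<^sup>2 = of_int (m\<^sup>2)" using Cp by blast
        show ?thesis
        proof (rule int_root[OF r])
          show "A00 n S k l + A11 n S k l = of_int T" using tq[OF l] T by simp
          show "(A00 n S k l)^2 + (A11 n S k l)^2 + 2 * A01 n S k l * A10 n S k l = of_int Q"
            using qq[OF l] Q by simp
          show "2 * of_int Q - (of_int T)^2 = (of_int (m^2) :: complex)" using m T Q by simp
        qed
      qed
    qed
  qed
qed


thm_deps theorem3p1

end
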